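(* Let $A$ be a real $B\times N'$ matrix of rank $r\ge1$ with nonzero singular values $\sigma_1\ge\sigma_2\ge\dots\ge\sigma_r$, all lying in $(0,1]$, left singular vectors $\boldsymbol\xi_j\in\mathbb{R}^B$ and right singular vectors $\hat{\boldsymbol\xi}_j\in\mathbb{R}^{N'}$ (orthonormal, $A\hat{\boldsymbol\xi}_j=\sigma_j\boldsymbol\xi_j$, $A^T\boldsymbol\xi_j=\sigma_j\hat{\boldsymbol\xi}_j$). Let $\boldsymbol b=\sum_{j=1}^r b_j\boldsymbol\xi_j$ and $\boldsymbol b^\delta=\sum_{j=1}^r b^\delta_j\boldsymbol\xi_j$ lie in the range of $A$, let $\boldsymbol x=\sum_{j=1}^r \frac{b_j}{\sigma_j}\hat{\boldsymbol\xi}_j$ be the minimal-norm solution of $A\boldsymbol x=\boldsymbol b$, and for a filter function $\phi(s,\alpha)$ let $$\boldsymbol x^{\alpha,\delta}=\sum_{j=1}^r b_j^\delta\frac{\phi(\sigma_j,\alpha)}{\sigma_j}\hat{\boldsymbol\xi}_j.$$ Let $f:[0,\infty)\to(0,1]$ be continuous and strictly decreasing with $f(0)=1$, $f(j)=\sigma_j$ for $j=1,\dots,r$, and $f(t)\to0$ as $t\to\infty$, and assume that, for the fixed $\alpha>0$, the functions $t\mapsto|1-\phi(f(t),\alpha)|$ and $t\mapsto|\phi(f(t),\alpha)|/f(t)$ are nondecreasing on $[0,r+1]$. Then for every $p\in[1,\infty)$ there is a constant $C_1$, depending only on $p$ and on the matrix $A$ (through its dimensions and singular vectors), and not on $\alpha,\phi,\boldsymbol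 b,\boldsymbol b^\delta$, such that $$\|\boldsymbol x-\boldsymbol x^{\alpha,\delta}\|_p\le C_1\|\boldsymbol x\|_\infty\,\|1-\phi(f(\cdot),\alpha)\|_{L^p(0,r+1)}+C_1\|\boldsymbol b-\boldsymbol b^\delta\|_\infty\,\|\phi(f(\cdot),\alpha)\,f(\cdot)^{-1}\|_{L^p(0,r+1)}.$$
   Context: Filtered linear regularization of the ill-conditioned linear system $A\boldsymbol x=\boldsymbol b$ arising from discretizing a convolution (averaging) operator; $\boldsymbol b^\delta$ is a perturbed right-hand side. $\|\cdot\|_p$ and $\|\cdot\|_\infty$ are vector norms; $\|\cdot\|_{L^p(0,r+1)}$ is the Lebesgue norm of a function of $t\in(0,r+1)$. *)

theory Defs
  imports "HOL-Analysis.Analysis"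
begin

definition vec_pnorm :: "real \<Rightarrow> real^'n \<Rightarrow> real" where
  "vec_pnorm p x = (\<Sum>i\<in>UNIV. \<bar>x $ i\<bar> powr p) powr (1 / p)"

definition vec_infnorm :: "real^'n \<Rightarrow> real" where
  "vec_infnorm x = Max (range (\<lambda>i. \<bar>x $ i\<bar>))"

definition Lp_norm_interval :: "real \<Rightarrow> real \<Rightarrow> (real \<Rightarrow> real) \<Rightarrow> real" where
  "Lp_norm_interval p T g = (integral {0..T} (\<lambda>t. \<bar>g t\<bar> powr p)) powr (1 / p)"

end

theory Submission
  imports Defs
begin


lemma int_lower:
  fixes G :: "real \<Rightarrow> real"
  assumes m: "mono_on {0..T} G" and nn: "\<forall>t\<in>{0..T}. 0 \<le> G t" and a0: "0 \<le> a" and aT: "a + 1 \<le> T"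
  shows "G a \<le> integral {0..T} G"
proof -
  have i1: "G integrable_on {0..T}" using m by (rule integrable_on_mono_on)
  have sub: "{a..a+1} \<subseteq> {0..T}" using a0 aT by auto
  have m2: "mono_on {a..a+1} G" using m sub by (rule mono_on_subset)
  have i2: "G integrable_on {a..a+1}" using m2 by (rule integrable_on_mono_on)
  have "integral {a..a+1} (\<lambda>_. G a) \<le> integral {a..a+1} G"
  proof (rule integral_le)
    show "(\<lambda>_. G a) integrable_on {a..a+1}" by (rule integrable_const_ivl)
    show "G integrable_on {a..a+1}" by (rule i2)
    fix x assume "x \<in> {a..a+1}"
    then show "G a \<le> G x"
      using sub a0 by (intro mono_onD[OF m]) auto
  qed
  then have "G a \<le> integral {a..a+1} G" by simp
  also have "\<dots> \<le> integral {0..T} G"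
    by (rule integral_subset_le[OF sub i2 i1 nn])
  finally show ?thesis .
qed

lemma coef_le_Lp:
  fixes h :: "real \<Rightarrow> real"
  assumes m: "mono_on {0..T} (\<lambda>t. \<bar>h t\<bar>)" and p: "p \<ge> 1" and a0: "0 \<le> a" and aT: "a + 1 \<le> T"
  shows "\<bar>h a\<bar> \<le> Lp_norm_interval p T h"
proof -
  let ?G = "\<lambda>t. \<bar>h t\<bar> powr p"
  have mG: "mono_on {0..T} ?G"
    using m p by (auto simp: mono_on_def intro!: powr_mono2)
  have "?G a \<le> integral {0..T} ?G"
    by (rule int_lower[OF mG _ a0 aT]) simp
  then have "(?G a) powr (1/p) \<le> (integral {0..T} ?G) powr (1/p)"
    using p by (intro powr_mono2) auto
  moreover have "(?G a) powr (1/p) = \<bar>h a\<bar>"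
    using p by (simp add: powr_powr)
  ultimately show ?thesis unfolding Lp_norm_interval_def by simp
qed

lemma infnorm_ge:
  fixes u :: "real^'k"
  shows "\<bar>u $ i\<bar> \<le> vec_infnorm u"
  unfolding vec_infnorm_def by (rule Max_ge) auto

lemma infnorm_nonneg:
  fixes u :: "real^'k"
  shows "0 \<le> vec_infnorm u"
  using infnorm_ge[of u undefined] by linarith

lemma inner_bound:
  fixes u v :: "real^'k"
  assumes "\<And>i. \<bar>v $ i\<bar> \<le> 1"
  shows "\<bar>u \<bullet> v\<bar> \<le> real CARD('k) * vec_infnorm u"
proof -
  have "\<bar>u \<bullet> v\<bar> = \<bar>\<Sum>i\<in>UNIV. u $ i * v $ i\<bar>" by (simp add: inner_vec_def)
  also have "\<dots> \<le> (\<Sum>i\<in>UNIV. \<bar>u $ i * v $ i\<bar>)" by (rule sum_abs)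
  also have "\<dots> \<le> (\<Sum>i\<in>(UNIV::'k set). vec_infnorm u)"
  proof (rule sum_mono)
    fix i :: 'k
    have "\<bar>u $ i * v $ i\<bar> = \<bar>u $ i\<bar> * \<bar>v $ i\<bar>" by (simp add: abs_mult)
    also have "\<dots> \<le> \<bar>u $ i\<bar> * 1" using assms[of i] by (intro mult_left_mono) auto
    also have "\<dots> \<le> vec_infnorm u" using infnorm_ge[of u i] by simp
    finally show "\<bar>u $ i * v $ i\<bar> \<le> vec_infnorm u" .
  qed
  also have "\<dots> = real CARD('k) * vec_infnorm u" by simp
  finally show ?thesis .
qed

lemma pnorm_bound:
  fixes v :: "real^'k"
  assumes b: "\<And>i. \<bar>v $ i\<bar> \<le> c" and p: "p \<ge> 1"
  shows "vec_pnorm p v \<le> real CARD('k) * c"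
proof -
  have c0: "0 \<le> c" using b[of undefined] by linarith
  have "(\<Sum>i\<in>UNIV. \<bar>v $ i\<bar> powr p) \<le> (\<Sum>i\<in>(UNIV::'k set). c powr p)"
    using b p by (intro sum_mono powr_mono2) auto
  also have "\<dots> = real CARD('k) * c powr p" by simp
  finally have s: "(\<Sum>i\<in>UNIV. \<bar>v $ i\<bar> powr p) \<le> real CARD('k) * c powr p" .
  have "vec_pnorm p v \<le> (real CARD('k) * c powr p) powr (1/p)"
    unfolding vec_pnorm_def using s p by (intro powr_mono2) (auto intro!: sum_nonneg)
  also have "\<dots> = real CARD('k) powr (1/p) * c"
    using p c0 by (simp add: powr_mult powr_powr)
  also have "\<dots> \<le> real CARD('k) * c"
  proof -
    have N1: "1 \<le> real CARD('k)" by (simp add: Suc_leI)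
    have "real CARD('k) powr (1/p) \<le> real CARD('k) powr 1"
      using N1 p by (intro powr_mono) auto
    then show ?thesis using c0 N1 by (intro mult_right_mono) auto
  qed
  finally show ?thesis .
qed

theorem mainTheorem2:
  fixes A :: "real^'n^'m"
    and r :: nat
    and \<sigma> :: "nat \<Rightarrow> real"
    and \<xi> :: "nat \<Rightarrow> real^'m"
    and \<xi>h :: "nat \<Rightarrow> real^'n"
    and p :: real
  assumes r_pos: "r \<ge> 1"
    and rank: "rank A = r"
    and sigma_range: "\<And>j. j \<in> {1..r} \<Longrightarrow> 0 < \<sigma> j \<and> \<sigma> j \<le> 1"
    and sigma_sorted: "\<And>i j. i \<in> {1..r} \<Longrightarrow> j \<in> {1..r} \<Longrightarrow> i \<le> j \<Longrightarrow> \<sigma> j \<le> \<sigma> i"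
    and xi_orth: "\<And>i j. i \<in> {1..r} \<Longrightarrow> j \<in> {1..r} \<Longrightarrow> \<xi> i \<bullet> \<xi> j = (if i = j then 1 else 0)"
    and xih_orth: "\<And>i j. i \<in> {1..r} \<Longrightarrow> j \<in> {1..r} \<Longrightarrow> \<xi>h i \<bullet> \<xi>h j = (if i = j then 1 else 0)"
    and right_sv: "\<And>j. j \<in> {1..r} \<Longrightarrow> A *v \<xi>h j = \<sigma> j *\<^sub>R \<xi> j"
    and left_sv: "\<And>j. j \<in> {1..r} \<Longrightarrow> transpose A *v \<xi> j = \<sigma> j *\<^sub>R \<xi>h j"
    and p_ge: "p \<ge> 1"
  shows "\<exists>C1. \<forall>(\<alpha>::real) (\<phi>::real \<Rightarrow> real \<Rightarrow> real) (bc::nat \<Rightarrow> real) (bdc::nat \<Rightarrow> real) (f::real \<Rightarrow> real).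
    ( \<alpha> > 0
    \<and> continuous_on {0..} f
    \<and> (\<forall>s t. 0 \<le> s \<and> s < t \<longrightarrow> f t < f s)
    \<and> (\<forall>t\<ge>0. 0 < f t \<and> f t \<le> 1)
    \<and> f 0 = 1
    \<and> (\<forall>j\<in>{1..r}. f (real j) = \<sigma> j)
    \<and> (f \<longlongrightarrow> 0) at_top
    \<and> mono_on {0..real r + 1} (\<lambda>t. \<bar>1 - \<phi> (f t) \<alpha>\<bar>)
    \<and> mono_on {0..real r + 1} (\<lambda>t. \<bar>\<phi> (f t) \<alpha>\<bar> / f t) )
    \<longrightarrow>
    (let b = (\<Sum>j=1..r. bc j *\<^sub>R \<xi> j);
         b\<delta> = (\<Sum>j=1..r. bdc j *\<^sub>R \<xi> j);
         x = (\<Sum>j=1..r. (bc j / \<sigma> j) *\<^sub>R \<xi>h j);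
         x\<alpha>\<delta> = (\<Sum>j=1..r. (bdc j * \<phi> (\<sigma> j) \<alpha> / \<sigma> j) *\<^sub>R \<xi>h j)
     in vec_pnorm p (x - x\<alpha>\<delta>)
        \<le> C1 * vec_infnorm x * Lp_norm_interval p (real r + 1) (\<lambda>t. 1 - \<phi> (f t) \<alpha>)
         + C1 * vec_infnorm (b - b\<delta>) * Lp_norm_interval p (real r + 1) (\<lambda>t. \<phi> (f t) \<alpha> / f t))"
proof -
  define N where "N = real CARD('n)"
  define M where "M = real CARD('m)"
  define C1 where "C1 = real r * N * (N + M)"
  have N0: "0 \<le> N" and M0: "0 \<le> M" by (simp_all add: N_def M_def)
  show ?thesis
  proof (rule exI[of _ C1], intro allI impI)
    fix \<alpha> :: real and \<phi> :: "real \<Rightarrow> real \<Rightarrow> real" and bc bdc :: "nat \<Rightarrow> real" and f :: "real \<Rightarrow> real"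
    assume H: "\<alpha> > 0
    \<and> continuous_on {0..} f
    \<and> (\<forall>s t. 0 \<le> s \<and> s < t \<longrightarrow> f t < f s)
    \<and> (\<forall>t\<ge>0. 0 < f t \<and> f t \<le> 1)
    \<and> f 0 = 1
    \<and> (\<forall>j\<in>{1..r}. f (real j) = \<sigma> j)
    \<and> (f \<longlongrightarrow> 0) at_top
    \<and> mono_on {0..real r + 1} (\<lambda>t. \<bar>1 - \<phi> (f t) \<alpha>\<bar>)
    \<and> mono_on {0..real r + 1} (\<lambda>t. \<bar>\<phi> (f t) \<alpha>\<bar> / f t)"
    then have fpos: "\<And>t. t \<ge> 0 \<Longrightarrow> 0 < f t"
      and fj: "\<And>j. j \<in> {1..r} \<Longrightarrow> f (real j) = \<sigma> j"
      and m1: "mono_on {0..real r + 1} (\<lambda>t. \<bar>1 - \<phi> (f t) \<alpha>\<bar>)"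
      and m2': "mono_on {0..real r + 1} (\<lambda>t. \<bar>\<phi> (f t) \<alpha>\<bar> / f t)"
      by auto
    have m2: "mono_on {0..real r + 1} (\<lambda>t. \<bar>\<phi> (f t) \<alpha> / f t\<bar>)"
    proof (rule mono_onI)
      fix s t assume st: "s \<in> {0..real r + 1}" "t \<in> {0..real r + 1}" "s \<le> t"
      have "\<bar>\<phi> (f s) \<alpha>\<bar> / f s \<le> \<bar>\<phi> (f t) \<alpha>\<bar> / f t" using mono_onD[OF m2' st] .
      moreover have "f s > 0" "f t > 0" using st fpos by auto
      ultimately show "\<bar>\<phi> (f s) \<alpha> / f s\<bar> \<le> \<bar>\<phi> (f t) \<alpha> / f t\<bar>" by (simp add: abs_div)
    qed
    define L1 where "L1 = Lp_norm_interval p (real r + 1) (\<lambda>t. 1 - \<phi> (f t) \<alpha>)"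
    define L2 where "L2 = Lp_norm_interval p (real r + 1) (\<lambda>t. \<phi> (f t) \<alpha> / f t)"
    define b where "b = (\<Sum>j=1..r. bc j *\<^sub>R \<xi> j)"
    define b\<delta> where "b\<delta> = (\<Sum>j=1..r. bdc j *\<^sub>R \<xi> j)"
    define x where "x = (\<Sum>j=1..r. (bc j / \<sigma> j) *\<^sub>R \<xi>h j)"
    define x\<alpha>\<delta> where "x\<alpha>\<delta> = (\<Sum>j=1..r. (bdc j * \<phi> (\<sigma> j) \<alpha> / \<sigma> j) *\<^sub>R \<xi>h j)"
    define X where "X = vec_infnorm x"
    define D where "D = vec_infnorm (b - b\<delta>)"
    have X0: "0 \<le> X" and D0: "0 \<le> D" by (simp_all add: X_def D_def infnorm_nonneg)
    have L10: "0 \<le> L1" and L20: "0 \<le> L2" by (simp_all add: L1_def L2_def Lp_norm_interval_def)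
    define e where "e j = bc j / \<sigma> j - bdc j * \<phi> (\<sigma> j) \<alpha> / \<sigma> j" for j
    have diff: "x - x\<alpha>\<delta> = (\<Sum>j=1..r. e j *\<^sub>R \<xi>h j)"
      unfolding x_def x\<alpha>\<delta>_def e_def by (simp add: sum_subtractf[symmetric] scaleR_diff_left)
    have bdiff: "b - b\<delta> = (\<Sum>j=1..r. (bc j - bdc j) *\<^sub>R \<xi> j)"
      unfolding b_def b\<delta>_def by (simp add: sum_subtractf[symmetric] scaleR_diff_left)
    have xh_comp: "\<bar>\<xi>h j $ i\<bar> \<le> 1" if "j \<in> {1..r}" for j i
    proof -
      have "norm (\<xi>h j) = 1" using xih_orth[OF that that] by (simp add: norm_eq_sqrt_inner)
      then show ?thesis using component_le_norm_cart[of "\<xi>h j" i] by simp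
    qed
    have xi_comp: "\<bar>\<xi> j $ i\<bar> \<le> 1" if "j \<in> {1..r}" for j i
    proof -
      have "norm (\<xi> j) = 1" using xi_orth[OF that that] by (simp add: norm_eq_sqrt_inner)
      then show ?thesis using component_le_norm_cart[of "\<xi> j" i] by simp
    qed
    have ecoef: "\<bar>e j\<bar> \<le> N * X * L1 + M * D * L2" if j: "j \<in> {1..r}" for j
    proof -
      have sj: "0 < \<sigma> j" using sigma_range[OF j] by simp
      have xin: "x \<bullet> \<xi>h j = bc j / \<sigma> j"
      proof -
        have "x \<bullet> \<xi>h j = (\<Sum>k=1..r. (bc k / \<sigma> k) * (\<xi>h k \<bullet> \<xi>h j))"
          unfolding x_def by (simp add: inner_sum_left)
        also have "\<dots> = (\<Sum>k=1..r. if k = j then bc k / \<sigma> k else 0)"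
          by (rule sum.cong) (use j in \<open>auto simp: xih_orth\<close>)
        also have "\<dots> = bc j / \<sigma> j" using j by simp
        finally show ?thesis .
      qed
      have bin: "(b - b\<delta>) \<bullet> \<xi> j = bc j - bdc j"
      proof -
        have "(b - b\<delta>) \<bullet> \<xi> j = (\<Sum>k=1..r. (bc k - bdc k) * (\<xi> k \<bullet> \<xi> j))"
          unfolding bdiff by (simp add: inner_sum_left)
        also have "\<dots> = (\<Sum>k=1..r. if k = j then bc k - bdc k else 0)"
          by (rule sum.cong) (use j in \<open>auto simp: xi_orth\<close>)
        also have "\<dots> = bc j - bdc j" using j by simp
        finally show ?thesis .
      qed
      have A1: "\<bar>bc j / \<sigma> j\<bar> \<le> N * X"
        using inner_bound[of "\<xi>h j" x] xh_comp[OF j] xin by (simp add: N_def X_def)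
      have A2: "\<bar>bc j - bdc j\<bar> \<le> M * D"
        using inner_bound[of "\<xi> j" "b - b\<delta>"] xi_comp[OF j] bin by (simp add: M_def D_def)
      have j0: "0 \<le> real j" and jT: "real j + 1 \<le> real r + 1" using j by auto
      have B1: "\<bar>1 - \<phi> (\<sigma> j) \<alpha>\<bar> \<le> L1"
        using coef_le_Lp[OF m1 p_ge j0 jT] fj[OF j] by (simp add: L1_def)
      have B2: "\<bar>\<phi> (\<sigma> j) \<alpha> / \<sigma> j\<bar> \<le> L2"
        using coef_le_Lp[OF m2 p_ge j0 jT] fj[OF j] by (simp add: L2_def)
      have eq: "e j = (bc j / \<sigma> j) * (1 - \<phi> (\<sigma> j) \<alpha>) + (bc j - bdc j) * (\<phi> (\<sigma> j) \<alpha> / \<sigma> j)"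
        unfolding e_def using sj by (simp add: field_simps)
      have "\<bar>e j\<bar> \<le> \<bar>bc j / \<sigma> j\<bar> * \<bar>1 - \<phi> (\<sigma> j) \<alpha>\<bar> + \<bar>bc j - bdc j\<bar> * \<bar>\<phi> (\<sigma> j) \<alpha> / \<sigma> j\<bar>"
        unfolding eq by (metis abs_mult abs_triangle_ineq)
      also have "\<dots> \<le> N * X * L1 + M * D * L2"
        using N0 M0 X0 D0 by (intro add_mono mult_mono A1 A2 B1 B2) auto
      finally show ?thesis .
    qed
    define K where "K = N * X * L1 + M * D * L2"
    have comp: "\<bar>(x - x\<alpha>\<delta>) $ i\<bar> \<le> real r * K" for i
    proof -
      have "\<bar>(x - x\<alpha>\<delta>) $ i\<bar> = \<bar>\<Sum>j=1..r. e j * \<xi>h j $ i\<bar>" unfolding diff by (simp add: sum_component)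
      also have "\<dots> \<le> (\<Sum>j=1..r. \<bar>e j * \<xi>h j $ i\<bar>)" by (rule sum_abs)
      also have "\<dots> \<le> (\<Sum>j=1..r. K)"
      proof (rule sum_mono)
        fix j assume j: "j \<in> {1..r}"
        have "\<bar>e j * \<xi>h j $ i\<bar> = \<bar>e j\<bar> * \<bar>\<xi>h j $ i\<bar>" by (simp add: abs_mult)
        also have "\<dots> \<le> K * 1" using ecoef[OF j] xh_comp[OF j] unfolding K_def by (intro mult_mono) auto
        finally show "\<bar>e j * \<xi>h j $ i\<bar> \<le> K" by simp
      qed
      also have "\<dots> = real r * K" by simp
      finally show ?thesis .
    qed
    have "vec_pnorm p (x - x\<alpha>\<delta>) \<le> N * (real r * K)"
      using pnorm_bound[OF comp p_ge] by (simp add: N_def)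
    also have "\<dots> = real r * N * N * X * L1 + real r * N * M * D * L2"
      by (simp add: K_def algebra_simps)
    also have "\<dots> \<le> C1 * X * L1 + C1 * D * L2"
    proof (intro add_mono)
      have "real r * N * N \<le> C1" unfolding C1_def using N0 M0 by (intro mult_left_mono) auto
      then show "real r * N * N * X * L1 \<le> C1 * X * L1"
        using X0 L10 by (intro mult_right_mono) auto
      have "real r * N * M \<le> C1" unfolding C1_def using N0 M0 by (intro mult_left_mono) auto
      then show "real r * N * M * D * L2 \<le> C1 * D * L2"
        using D0 L20 by (intro mult_right_mono) auto
    qed
    finally show "let b = (\<Sum>j=1..r. bc j *\<^sub>R \<xi> j);
         b\<delta> = (\<Sum>j=1..r. bdc j *\<^sub>R \<xi> j);
         x = (\<Sum>j=1..r. (bc j / \<sigma> j) *\<^sub>R \<xi>h j);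
         x\<alpha>\<delta> = (\<Sum>j=1..r. (bdc j * \<phi> (\<sigma> j) \<alpha> / \<sigma> j) *\<^sub>R \<xi>h j)
     in vec_pnorm p (x - x\<alpha>\<delta>)
        \<le> C1 * vec_infnorm x * Lp_norm_interval p (real r + 1) (\<lambda>t. 1 - \<phi> (f t) \<alpha>)
         + C1 * vec_infnorm (b - b\<delta>) * Lp_norm_interval p (real r + 1) (\<lambda>t. \<phi> (f t) \<alpha> / f t)"
      unfolding Let_def by (simp add: X_def D_def L1_def L2_def x_def x\<alpha>\<delta>_def b_def b\<delta>_def)
  qed
qed

end
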